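(* Let $I,J\in\mathbb Z$ with $4I^3\ne J^2$, and let \[ g(a,c,d)=(I-12d+3ac)(96d+3ac-2I)^2-(J+27c^2+27a^2d)^2 . \] Then the affine surface $Y_{I,J}\subset\mathbb A^3$ defined by $g(a,c,d)=0$ contains no rational lines, i.e. there is no set $\{(\alpha,\gamma,\delta)+t(A,C,D): t\in\mathbb Q\}$ with $(\alpha,\gamma,\delta)\in\mathbb Q^3$ and $(A,C,D)\in\mathbb Q^3\setminus\{\mathbf 0\}$ contained in the zero set of $g$. *)

theory Defs
  imports Main "HOL.Rat"
begin

definition g_IJ :: "int \<Rightarrow> int \<Rightarrow> rat \<Rightarrow> rat \<Rightarrow> rat \<Rightarrow> rat" where
  "g_IJ I J a c d =
     (of_int I - 12 * d + 3 * a * c) * (96 * d + 3 * a * c - 2 * of_int I)^2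
     - (of_int J + 27 * c^2 + 27 * a^2 * d)^2"

end

theory Submission imports Defs "HOL-Computational_Algebra.Polynomial_Factorial" "HOL-Computational_Algebra.Field_as_Ring" begin
lemma sq_lemma:
  fixes P1 P2 P3 :: "rat poly"
  assumes e: "P1 * P2^2 = P3^2" and nz: "P2 \<noteq> 0"
  shows "\<exists>h. P1 = h*h \<and> P3 = h*P2"
proof -
  have "gcd P2 P3 \<noteq> 0" using nz by simp
  then obtain u v where u: "P2 = u * gcd P2 P3" and v: "P3 = v * gcd P2 P3" and cp: "coprime u v"
    using gcd_coprime_exists by blast
  define G where "G = gcd P2 P3"
  have G0: "G \<noteq> 0" using nz G_def by simp
  have "(P1 * u^2) * G^2 = v^2 * G^2" using e u v unfolding G_def[symmetric]
    by (simp add: power_mult_distrib mult.assoc)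
  hence e2: "P1 * u^2 = v^2" using G0 by simp
  have "v^2 = u * (P1 * u)" using e2 by (simp add: power2_eq_square algebra_simps)
  hence "u dvd v^2" by (metis dvd_triv_left)
  moreover have "coprime u (v^2)" using cp by simp
  ultimately have "is_unit u" using coprime_absorb_left by blast
  hence u00: "u \<noteq> 0" by auto
  hence u0: "u \<noteq> 0" "degree u = 0" using is_unit_iff_degree \<open>is_unit u\<close> by auto
  then obtain c where c: "u = [:c:]" "c \<noteq> 0" by (metis degree_eq_zeroE pCons_eq_0_iff)
  define h where "h = smult (1/c) v"
  have hu: "h * u = v" using c by (simp add: h_def)
  have "P1 * u^2 = (h*u)^2" using e2 hu by simp
  hence "P1 * u^2 = (h*h) * u^2" by (simp add: power2_eq_square algebra_simps)
  hence "P1 = h*h" using u0 by simp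
  moreover have "P3 = h * P2"
  proof -
    have "P3 = v * G" using v G_def by simp
    also have "\<dots> = h * (u * G)" using hu by (simp add: mult.assoc)
    also have "u * G = P2" using u G_def by simp
    finally show ?thesis .
  qed
  ultimately show ?thesis by blast
qed
lemma core:
  fixes \<alpha> A \<gamma> C \<delta> D :: rat
  assumes H: "\<forall>t. g_IJ I J (\<alpha> + t*A) (\<gamma> + t*C) (\<delta> + t*D) = 0"
  defines "f0 \<equiv> of_int I - 12*\<delta> + 3*\<alpha>*\<gamma>" and "f1 \<equiv> -12*D + 3*(\<alpha>*C+\<gamma>*A)" and "f2 \<equiv> 3*A*C"
    and "e0 \<equiv> 96*\<delta> + 3*\<alpha>*\<gamma> - 2*of_int I" and "e1 \<equiv> 96*D + 3*(\<alpha>*C+\<gamma>*A)" and "e2 \<equiv> 3*A*C"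
    and "c0 \<equiv> of_int J + 27*\<gamma>^2 + 27*\<alpha>^2*\<delta>" and "c1 \<equiv> 54*\<gamma>*C + 27*(\<alpha>^2*D + 2*\<alpha>*A*\<delta>)"
    and "c2 \<equiv> 27*C^2 + 27*(A^2*\<delta> + 2*\<alpha>*A*D)" and "c3 \<equiv> 27*A^2*D"
  shows "(e0 = 0 \<and> e1 = 0 \<and> e2 = 0 \<and> c0 = 0 \<and> c1 = 0 \<and> c2 = 0 \<and> c3 = 0) \<or>
    (\<exists>p q. f0 = p*p \<and> f1 = 2*p*q \<and> f2 = q*q \<and> c0 = p*e0 \<and> c1 = p*e1+q*e0 \<and> c2 = p*e2+q*e1 \<and> c3 = q*e2)"
proof -
  define P1 where "P1 = [:f0, f1, f2:]"
  define P2 where "P2 = [:e0, e1, e2:]"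
  define P3 where "P3 = [:c0, c1, c2, c3:]"
  have "poly (P1*P2^2 - P3^2) t = 0" for t
  proof -
    have 1: "poly P1 t = of_int I - 12*(\<delta> + t*D) + 3*(\<alpha> + t*A)*(\<gamma> + t*C)"
      by (simp add: P1_def f0_def f1_def f2_def algebra_simps)
    have 2: "poly P2 t = 96*(\<delta> + t*D) + 3*(\<alpha> + t*A)*(\<gamma> + t*C) - 2*of_int I"
      by (simp add: P2_def e0_def e1_def e2_def algebra_simps)
    have 3: "poly P3 t = of_int J + 27*(\<gamma> + t*C)^2 + 27*(\<alpha> + t*A)^2*(\<delta> + t*D)"
      by (simp add: P3_def c0_def c1_def c2_def c3_def algebra_simps power2_eq_square)
    show ?thesis using H[rule_format, of t] unfolding g_IJ_def by (simp add: 1 2 3)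
  qed
  hence E: "P1*P2^2 = P3^2" using poly_all_0_iff_0 by (metis eq_iff_diff_eq_0)
  show ?thesis
  proof (cases "P2 = 0")
    case True
    hence "P3 = 0" using E by simp
    thus ?thesis using True unfolding P2_def P3_def by simp
  next
    case False
    then obtain h where h: "P1 = h*h" "P3 = h*P2" using sq_lemma E by blast
    have dP1: "degree P1 \<le> 2" unfolding P1_def by (simp add: degree_pCons_le)
    have dh: "degree h \<le> 1"
    proof (cases "h = 0")
      case False
      hence "degree (h*h) = degree h + degree h" by (simp add: degree_mult_eq)
      thus ?thesis using dP1 h by simp
    qed simp
    obtain p h' where h': "h = pCons p h'" by (cases h) auto
    obtain q r where r: "h' = pCons q r" by (cases h') auto
    have "r = 0" using dh h' r by (cases "r = 0") auto
    hence hh: "h = [:p, q:]" using h' r by simp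
    have "P1 = [:p,q:]*[:p,q:]" "P3 = [:p,q:]*P2" using h hh by auto
    hence "f0 = p*p \<and> f1 = 2*p*q \<and> f2 = q*q \<and> c0 = p*e0 \<and> c1 = p*e1+q*e0 \<and> c2 = p*e2+q*e1 \<and> c3 = q*e2"
      unfolding P1_def P2_def P3_def by (simp add: algebra_simps)
    thus ?thesis by blast
  qed
qed

lemma normalized:
  fixes \<gamma> C \<delta> D :: rat
  assumes H: "\<forall>t. g_IJ I J (0 + t*1) (\<gamma> + t*C) (\<delta> + t*D) = 0"
  shows "4 * I^3 = J^2"
proof -
  define Ir where "Ir = (of_int I :: rat)"
  define Jr where "Jr = (of_int J :: rat)"
  have "4 * Ir^3 = Jr^2"
    using core[OF H]
  proof
    assume "(96*\<delta> + 3*0*\<gamma> - 2*of_int I = 0 \<and> 96*D + 3*(0*C+\<gamma>*1) = 0 \<and> 3*1*C = 0 \<and>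
       of_int J + 27*\<gamma>^2 + 27*0^2*\<delta> = 0 \<and> 54*\<gamma>*C + 27*(0^2*D + 2*0*1*\<delta>) = 0 \<and>
       27*C^2 + 27*(1^2*\<delta> + 2*0*1*D) = 0 \<and> 27*1^2*D = (0::rat))"
    hence z1: "96*\<delta> + 3*0*\<gamma> - 2*of_int I = 0" and z2: "96*D + 3*(0*C+\<gamma>*1) = 0"
      and z3: "3*1*C = 0" and z4: "of_int J + 27*\<gamma>^2 + 27*0^2*\<delta> = 0"
      and z5: "27*C^2 + 27*(1^2*\<delta> + 2*0*1*D) = 0" and z6: "27*1^2*D = (0::rat)" by blast+
    have s1: "96*\<delta> - 2*Ir = 0" using z1 unfolding Ir_def by simp
    have s2: "96*D + 3*\<gamma> = 0" using z2 by simp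
    have s3: "C = 0" using z3 by simp
    have s4: "Jr + 27*\<gamma>^2 = 0" using z4 unfolding Jr_def by simp
    have s5: "27*C^2 + 27*\<delta> = 0" using z5 by simp
    have s6: "D = 0" using z6 by simp
    from s6 s2 have "\<gamma> = 0" by simp
    moreover from s3 s5 have "\<delta> = 0" by simp
    ultimately have "Ir = 0" "Jr = 0" using s1 s4 by simp_all
    thus ?thesis by simp
  next
    assume "\<exists>p q. of_int I - 12*\<delta> + 3*0*\<gamma> = p*p \<and> -12*D + 3*(0*C+\<gamma>*1) = 2*p*q \<and> 3*1*C = q*q \<and>
       of_int J + 27*\<gamma>^2 + 27*0^2*\<delta> = p*(96*\<delta> + 3*0*\<gamma> - 2*of_int I) \<and>
       54*\<gamma>*C + 27*(0^2*D + 2*0*1*\<delta>) = p*(96*D + 3*(0*C+\<gamma>*1)) + q*(96*\<delta> + 3*0*\<gamma> - 2*of_int I) \<and>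
       27*C^2 + 27*(1^2*\<delta> + 2*0*1*D) = p*(3*1*C) + q*(96*D + 3*(0*C+\<gamma>*1)) \<and>
       27*1^2*D = q*(3*1*C)"
    then obtain p q where r1: "of_int I - 12*\<delta> + 3*0*\<gamma> = p*p" and r2: "-12*D + 3*(0*C+\<gamma>*1) = 2*p*q"
       and r3: "3*1*C = q*q"
       and r4: "of_int J + 27*\<gamma>^2 + 27*0^2*\<delta> = p*(96*\<delta> + 3*0*\<gamma> - 2*of_int I)"
       and r5: "27*C^2 + 27*(1^2*\<delta> + 2*0*1*D) = p*(3*1*C) + q*(96*D + 3*(0*C+\<gamma>*1))"
       and r6: "27*1^2*D = q*(3*1*C)" by blast
    have e1: "Ir - 12*\<delta> = p*p" using r1 unfolding Ir_def by simp
    have e2: "-12*D + 3*\<gamma> = 2*p*q" using r2 by simp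
    have e3: "3*C = q*q" using r3 by simp
    have e4': "Jr + 27*\<gamma>^2 = p*(96*\<delta> - 2*Ir)" using r4 unfolding Ir_def Jr_def by simp
    have e5': "27*C^2 + 27*\<delta> = p*(3*C) + q*(96*D + 3*\<gamma>)" using r5 by simp
    have e6: "27*D = q*(3*C)" using r6 by simp
    note e = e1 e2 e3 e4' e5' e6
    have hC: "C = q*q/3" using e(3) by simp
    have hD: "D = q^3/27" using e(6) unfolding e(3) by (simp add: power3_eq_cube)
    have hg: "\<gamma> = 2*p*q/3 + 4*q^3/27" using e(2) hD by (simp add: field_simps)
    have hd: "\<delta> = (Ir - p*p)/12" using e(1) by simp
    have e5: "27*(q*q/3)^2 + 27*((Ir-p*p)/12) = p*(3*(q*q/3)) + q*(96*(q^3/27) + 3*(2*p*q/3 + 4*q^3/27))"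
      using e(5) by (simp only: hC hD hg hd)
    have "Ir = p*p + 4/9*q^4 + 4/3*p*q^2"
      using e5 by (simp add: field_simps power2_eq_square power3_eq_cube power4_eq_xxxx)
    moreover have sq: "(p + 2*q^2/3)^2 = p*p + 4/9*q^4 + 4/3*p*q^2"
      by (simp add: power2_eq_square power4_eq_xxxx algebra_simps)
    ultimately have hI: "Ir = (p + 2*q^2/3)^2" by simp
    have e4: "Jr + 27*(2*p*q/3 + 4*q^3/27)^2 = p*(96*((Ir - p*p)/12) - 2*Ir)"
      using e(4) by (simp only: hg hd)
    have "Jr = p*(96*((Ir - p*p)/12) - 2*Ir) - 27*(2*p*q/3 + 4*q^3/27)^2" using e4 by simp
    also have "\<dots> = -2*(p + 2*q^2/3)^3" unfolding hI by algebra
    finally have hJ: "Jr = -2*(p + 2*q^2/3)^3" .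
    show ?thesis unfolding hI hJ by algebra
  qed
  hence "of_int (4 * I^3) = (of_int (J^2) :: rat)" unfolding Ir_def Jr_def by simp
  thus ?thesis using of_int_eq_iff by blast
qed


theorem lemma6p1:
  fixes I J :: int
  assumes "4 * I^3 \<noteq> J^2"
  shows "\<not> (\<exists>\<alpha> \<gamma> \<delta> A C D :: rat. (A, C, D) \<noteq> (0, 0, 0) \<and>
            (\<forall>t :: rat. g_IJ I J (\<alpha> + t * A) (\<gamma> + t * C) (\<delta> + t * D) = 0))"
proof
  assume "\<exists>\<alpha> \<gamma> \<delta> A C D :: rat. (A, C, D) \<noteq> (0, 0, 0) \<and>
            (\<forall>t :: rat. g_IJ I J (\<alpha> + t * A) (\<gamma> + t * C) (\<delta> + t * D) = 0)"
  then obtain \<alpha> \<gamma> \<delta> A C D :: rat where nz: "(A, C, D) \<noteq> (0, 0, 0)"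
    and H: "\<forall>t :: rat. g_IJ I J (\<alpha> + t * A) (\<gamma> + t * C) (\<delta> + t * D) = 0" by blast
  show False
  proof (cases "A = 0")
    case True
    have "C = 0 \<and> D = 0"
      using core[OF H]
    proof
      assume "(96*\<delta> + 3*\<alpha>*\<gamma> - 2*of_int I = 0 \<and> 96*D + 3*(\<alpha>*C+\<gamma>*A) = 0 \<and> 3*A*C = 0 \<and>
       of_int J + 27*\<gamma>^2 + 27*\<alpha>^2*\<delta> = 0 \<and> 54*\<gamma>*C + 27*(\<alpha>^2*D + 2*\<alpha>*A*\<delta>) = 0 \<and>
       27*C^2 + 27*(A^2*\<delta> + 2*\<alpha>*A*D) = 0 \<and> 27*A^2*D = (0::rat))"
      hence r1: "96*D + 3*(\<alpha>*C+\<gamma>*A) = 0" and r2: "27*C^2 + 27*(A^2*\<delta> + 2*\<alpha>*A*D) = 0" by blast+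
      from r2 True have "C^2 = 0" by simp
      hence "C = 0" by simp
      with r1 True show ?thesis by simp
    next
      assume "\<exists>p q. of_int I - 12*\<delta> + 3*\<alpha>*\<gamma> = p*p \<and> -12*D + 3*(\<alpha>*C+\<gamma>*A) = 2*p*q \<and> 3*A*C = q*q \<and>
       of_int J + 27*\<gamma>^2 + 27*\<alpha>^2*\<delta> = p*(96*\<delta> + 3*\<alpha>*\<gamma> - 2*of_int I) \<and>
       54*\<gamma>*C + 27*(\<alpha>^2*D + 2*\<alpha>*A*\<delta>) = p*(96*D + 3*(\<alpha>*C+\<gamma>*A)) + q*(96*\<delta> + 3*\<alpha>*\<gamma> - 2*of_int I) \<and>
       27*C^2 + 27*(A^2*\<delta> + 2*\<alpha>*A*D) = p*(3*A*C) + q*(96*D + 3*(\<alpha>*C+\<gamma>*A)) \<and>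
       27*A^2*D = q*(3*A*C)"
      then obtain p q where raw: "-12*D + 3*(\<alpha>*C+\<gamma>*A) = 2*p*q" "3*A*C = q*q"
        "27*C^2 + 27*(A^2*\<delta> + 2*\<alpha>*A*D) = p*(3*A*C) + q*(96*D + 3*(\<alpha>*C+\<gamma>*A))" by blast
      have "q = 0" using raw(2) True by simp
      hence h2: "C^2 = 0" and h1: "-12*D + 3*(\<alpha>*C) = 0" using raw True by simp_all
      from h2 have "C = 0" by simp
      with h1 show ?thesis by simp
    qed
    thus False using nz True by simp
  next
    case False
    define C' where "C' = C/A"
    define D' where "D' = D/A"
    define \<gamma>' where "\<gamma>' = \<gamma> - C*\<alpha>/A"
    define \<delta>' where "\<delta>' = \<delta> - D*\<alpha>/A"
    have "\<forall>s. g_IJ I J (0 + s*1) (\<gamma>' + s*C') (\<delta>' + s*D') = 0"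
    proof
      fix s :: rat
      have "g_IJ I J (\<alpha> + ((s-\<alpha>)/A) * A) (\<gamma> + ((s-\<alpha>)/A) * C) (\<delta> + ((s-\<alpha>)/A) * D) = 0"
        using H by blast
      moreover have "\<alpha> + ((s-\<alpha>)/A) * A = 0 + s*1" using False by (simp add: field_simps)
      moreover have "\<gamma> + ((s-\<alpha>)/A) * C = \<gamma>' + s*C'" using False
        unfolding \<gamma>'_def C'_def by (simp add: field_simps)
      moreover have "\<delta> + ((s-\<alpha>)/A) * D = \<delta>' + s*D'" using False
        unfolding \<delta>'_def D'_def by (simp add: field_simps)
      ultimately show "g_IJ I J (0 + s*1) (\<gamma>' + s*C') (\<delta>' + s*D') = 0" by simp
    qed
    from normalized[OF this] show False using assms by simp
  qed
qed

end
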